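(* Let $B$ be an $n \times n$ matrix with integer coefficients, let $e_n = (0,\dots,0,1)^T \in \mathbb{R}^n$, and let $q(t) = \det\left(B - tI + t\, e_n e_n^*\right) = \sum_i q_i t^i$. Then \[ \max_i |q_i| \le 2\left(2\sqrt{n}\,\max_{i,j}|B_{ij}|\right)^n. \] *)

theory Defs
  imports "Jordan_Normal_Form.Determinant" "HOL-Computational_Algebra.Polynomial"
begin

definition qpoly :: "nat \<Rightarrow> int mat \<Rightarrow> int poly" where
  "qpoly n B = det (map_mat (\<lambda>x. [:x:]) B - [:0, 1:] \<cdot>\<^sub>m (1\<^sub>m n)
      + [:0, 1:] \<cdot>\<^sub>m (mat_of_cols n [unit_vec n (n - 1)] * mat_of_rows n [unit_vec n (n - 1)]))"

end

theory Submission
  imports Defs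
begin

definition dd :: "nat \<Rightarrow> nat \<Rightarrow> nat \<Rightarrow> int" where
  "dd n i j = (if i = j \<and> i \<noteq> n - 1 then 1 else 0)"

definition EE :: "nat \<Rightarrow> int mat \<Rightarrow> nat set \<Rightarrow> int mat" where
  "EE n B S = mat n n (\<lambda>(i,j). if i \<in> S then dd n i j else B $$ (i,j))"

lemma qpoly_mat:
  assumes B: "B \<in> carrier_mat n n"
  shows "qpoly n B = det (mat n n (\<lambda>(i,j). [:0,-1:] * [:dd n i j:] + [:B $$ (i,j):]))"
  unfolding qpoly_def
  by (rule arg_cong[of _ _ det], rule eq_matI)
    (use B in \<open>auto simp: dd_def mat_of_cols_def mat_of_rows_def scalar_prod_def unit_vec_def one_pCons\<close>)

lemma prod_const_poly: "finite S \<Longrightarrow> (\<Prod>i\<in>S. [:f i:]) = [:\<Prod>i\<in>S. f i:]"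
  by (induction S rule: finite_induct) (auto simp: one_pCons mult.commute)

lemma signof_mult_coeff: "coeff (signof p * q) k = signof p * coeff q k"
  by (simp add: sign_def)

lemma coeff_qpoly:
  assumes B: "B \<in> carrier_mat n n"
  shows "coeff (qpoly n B) k =
    (\<Sum>S\<in>Pow {0..<n}. if k = card S then (-1)^card S * det (EE n B S) else 0)"
proof -
  let ?I = "{0..<n}"
  let ?P = "{p. p permutes ?I}"
  let ?x = "\<lambda>i j. [:B $$ (i,j):]"
  let ?y = "\<lambda>i j. [:0,-1:] * [:dd n i j:]"
  have hterm: "(\<Prod>i\<in>?I. ?y i (p i) + ?x i (p i)) =
     (\<Sum>S\<in>Pow ?I. monom ((-1)^card S * (\<Prod>i\<in>?I. EE n B S $$ (i, p i))) (card S))"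
    if p: "p permutes ?I" for p
  proof -
    have "(\<Prod>i\<in>?I. ?y i (p i) + ?x i (p i)) = (\<Sum>S\<in>Pow ?I. (\<Prod>i\<in>S. ?y i (p i)) * (\<Prod>i\<in>?I-S. ?x i (p i)))"
      by (rule prod_add) simp
    also have "\<dots> = (\<Sum>S\<in>Pow ?I. monom ((-1)^card S * (\<Prod>i\<in>?I. EE n B S $$ (i, p i))) (card S))"
    proof (rule sum.cong[OF refl])
      fix S assume S: "S \<in> Pow ?I"
      then have S': "S \<subseteq> ?I" and fS: "finite S" using finite_subset by auto
      have pi: "i \<in> ?I \<Longrightarrow> p i < n" for i using p by (simp add: permutes_in_image)
      have E: "(\<Prod>i\<in>?I. EE n B S $$ (i, p i)) = (\<Prod>i\<in>S. dd n i (p i)) * (\<Prod>i\<in>?I-S. B $$ (i, p i))"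
      proof -
        have "(\<Prod>i\<in>?I. EE n B S $$ (i, p i)) = (\<Prod>i\<in>?I. if i \<in> S then dd n i (p i) else B $$ (i, p i))"
          by (rule prod.cong) (auto simp: EE_def pi)
        also have "\<dots> = (\<Prod>i\<in>?I \<inter> S. dd n i (p i)) * (\<Prod>i\<in>?I \<inter> - S. B $$ (i, p i))"
          by (simp add: prod.If_cases)
        also have "?I \<inter> S = S" using S' by auto
        also have "?I \<inter> - S = ?I - S" by auto
        finally show ?thesis .
      qed
      have m1: "[:0,-1::int:] = monom (-1) 1" by (simp add: monom_Suc monom_0)
      have c0: "\<And>c::int. [:c:] = monom c 0" by (simp add: monom_0)
      have "(\<Prod>i\<in>S. ?y i (p i)) = [:0,-1:]^card S * [:\<Prod>i\<in>S. dd n i (p i):]"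
        by (simp only: prod.distrib prod_constant prod_const_poly[OF fS])
      also have "\<dots> = monom ((-1)^card S * (\<Prod>i\<in>S. dd n i (p i))) (card S)"
        by (simp only: m1 c0[of "\<Prod>i\<in>S. dd n i (p i)"] monom_power mult_monom) simp
      finally have Y: "(\<Prod>i\<in>S. ?y i (p i)) = monom ((-1)^card S * (\<Prod>i\<in>S. dd n i (p i))) (card S)" .
      have X: "(\<Prod>i\<in>?I-S. ?x i (p i)) = monom (\<Prod>i\<in>?I-S. B $$ (i, p i)) 0"
        by (subst prod_const_poly) (simp_all add: monom_0)
      show "(\<Prod>i\<in>S. ?y i (p i)) * (\<Prod>i\<in>?I-S. ?x i (p i)) =
          monom ((-1)^card S * (\<Prod>i\<in>?I. EE n B S $$ (i, p i))) (card S)"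
        unfolding E Y X mult_monom by (simp add: mult.assoc)
    qed
    finally show ?thesis .
  qed
  have "qpoly n B = (\<Sum>p\<in>?P. signof p * (\<Prod>i\<in>?I. ?y i (p i) + ?x i (p i)))"
    unfolding qpoly_mat[OF B] by (subst det_def'[of _ n]) auto
  also have "\<dots> = (\<Sum>p\<in>?P. signof p * (\<Sum>S\<in>Pow ?I. monom ((-1)^card S * (\<Prod>i\<in>?I. EE n B S $$ (i, p i))) (card S)))"
    by (rule sum.cong[OF refl]) (simp only: hterm mem_Collect_eq)
  finally have "coeff (qpoly n B) k = (\<Sum>p\<in>?P. signof p * (\<Sum>S\<in>Pow ?I. coeff (monom ((-1)^card S * (\<Prod>i\<in>?I. EE n B S $$ (i, p i))) (card S)) k))"
    by (simp only: coeff_sum signof_mult_coeff)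
  also have "\<dots> = (\<Sum>p\<in>?P. \<Sum>S\<in>Pow ?I. if k = card S then (-1)^card S * (signof p * (\<Prod>i\<in>?I. EE n B S $$ (i, p i))) else 0)"
    by (rule sum.cong[OF refl], simp add: coeff_monom sum_distrib_left, rule sum.cong[OF refl]) (auto simp: mult.left_commute)
  also have "\<dots> = (\<Sum>S\<in>Pow ?I. \<Sum>p\<in>?P. if k = card S then (-1)^card S * (signof p * (\<Prod>i\<in>?I. EE n B S $$ (i, p i))) else 0)"
    by (rule sum.swap)
  also have "\<dots> = (\<Sum>S\<in>Pow ?I. if k = card S then (-1)^card S * det (EE n B S) else 0)"
    by (rule sum.cong[OF refl]) (simp add: det_def'[of _ n] EE_def sum_distrib_left)
  finally show ?thesis .
qed

lemma orth_det:
  fixes A :: "real mat"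
  assumes A: "A \<in> carrier_mat n n"
    and orth: "\<And>i j. i < n \<Longrightarrow> j < n \<Longrightarrow> i \<noteq> j \<Longrightarrow> (\<Sum>l<n. A $$ (i,l) * A $$ (j,l)) = 0"
  shows "(det A)^2 = (\<Prod>i<n. \<Sum>l<n. (A $$ (i,l))^2)"
proof -
  define G where "G = A * transpose_mat A"
  have G: "G \<in> carrier_mat n n" using A unfolding G_def by auto
  have Gij: "G $$ (i,j) = (\<Sum>l<n. A $$ (i,l) * A $$ (j,l))" if "i < n" "j < n" for i j
    using A that unfolding G_def
    by (auto simp: scalar_prod_def lessThan_atLeast0 intro!: sum.cong)
  have ut: "upper_triangular G"
    unfolding upper_triangular_def using G Gij orth by auto
  have "det G = prod_list (diag_mat G)" by (rule det_upper_triangular[OF ut G])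
  also have "\<dots> = (\<Prod>i<n. \<Sum>l<n. (A $$ (i,l))^2)"
    unfolding prod_list_diag_prod using G Gij
    by (auto simp: power2_eq_square lessThan_atLeast0 intro!: prod.cong)
  finally have 1: "det G = (\<Prod>i<n. \<Sum>l<n. (A $$ (i,l))^2)" .
  have "det G = det A * det (transpose_mat A)"
    unfolding G_def by (rule det_mult[OF A], use A in auto)
  also have "\<dots> = (det A)^2" using det_transpose[OF A] by (simp add: power2_eq_square)
  finally show ?thesis using 1 by simp
qed

lemma row_comb_det:
  fixes A :: "'a::comm_ring_1 mat"
  assumes A: "A \<in> carrier_mat n n" and k: "k < n" and J: "J \<subseteq> {0..<n} - {k}"
  shows "det (mat n n (\<lambda>(i,l). if i = k then A $$ (k,l) + (\<Sum>j\<in>J. c j * A $$ (j,l)) else A $$ (i,l))) = det A"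
proof -
  have "finite J" using J finite_subset by blast
  from this J show ?thesis
  proof (induction J rule: finite_subset_induct)
    case empty
    have "mat n n (\<lambda>(i,l). if i = k then A $$ (k,l) + (\<Sum>j\<in>{}. c j * A $$ (j,l)) else A $$ (i,l)) = A"
      using A by (auto intro!: eq_matI)
    then show ?case by simp
  next
    case (insert x F)
    let ?M = "\<lambda>F. mat n n (\<lambda>(i,l). if i = k then A $$ (k,l) + (\<Sum>j\<in>F. c j * A $$ (j,l)) else A $$ (i,l))"
    have "?M (insert x F) = addrow (c x) k x (?M F)"
      using insert A k by (auto intro!: eq_matI simp: mat_addrow_def)
    moreover have "det (addrow (c x) k x (?M F)) = det (?M F)"
      by (rule det_addrow[of _ n], use insert in auto)
    ultimately show ?case using insert by simp
  qed
qed

lemma zero_row: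
  fixes A :: "real mat"
  assumes "(\<Sum>l<n. A $$ (j,l) * A $$ (j,l)) = 0" "l < n"
  shows "A $$ (j,l) = 0"
proof -
  have "\<forall>l\<in>{..<n}. A $$ (j,l) * A $$ (j,l) = 0"
    using assms(1) by (subst sum_nonneg_eq_0_iff[symmetric]) auto
  then show ?thesis using assms(2) by auto
qed

lemma hadamard_aux:
  fixes A :: "real mat"
  assumes "k \<le> n" "A \<in> carrier_mat n n"
    "\<And>i j. k \<le> i \<Longrightarrow> i < n \<Longrightarrow> k \<le> j \<Longrightarrow> j < n \<Longrightarrow> i \<noteq> j \<Longrightarrow> (\<Sum>l<n. A $$ (i,l) * A $$ (j,l)) = 0"
  shows "(det A)^2 \<le> (\<Prod>i<n. \<Sum>l<n. (A $$ (i,l))^2)"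
  using assms
proof (induction k arbitrary: A rule: less_induct)
  case (less k)
  show ?case
  proof (cases "k = 0")
    case True
    then show ?thesis using orth_det[OF less.prems(2)] less.prems(3) by simp
  next
    case False
    then obtain k' where kk: "k = Suc k'" by (cases k) auto
    have A: "A \<in> carrier_mat n n" by fact
    have k': "k' < n" using kk less.prems by simp
    define r where "r = (\<lambda>i j. \<Sum>l<n. A $$ (i,l) * A $$ (j,l))"
    define J where "J = {j. k' < j \<and> j < n \<and> r j j \<noteq> 0}"
    define c where "c = (\<lambda>j. - r k' j / r j j)"
    define A' where "A' = mat n n (\<lambda>(i,l). if i = k' then A $$ (k',l) + (\<Sum>j\<in>J. c j * A $$ (j,l)) else A $$ (i,l))"
    have A': "A' \<in> carrier_mat n n" unfolding A'_def by simp
    have J: "J \<subseteq> {0..<n} - {k'}" unfolding J_def by auto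
    have finJ: "finite J" unfolding J_def by auto
    have detA': "det A' = det A" unfolding A'_def by (rule row_comb_det[OF A k' J])
    have A'i: "A' $$ (i,l) = A $$ (i,l)" if "i < n" "l < n" "i \<noteq> k'" for i l
      using that unfolding A'_def by simp
    have A'k: "A' $$ (k',l) = A $$ (k',l) + (\<Sum>j\<in>J. c j * A $$ (j,l))" if "l < n" for l
      using that k' unfolding A'_def by simp
    have rorth: "r i j = 0" if "k' < i" "i < n" "k' < j" "j < n" "i \<noteq> j" for i j
      using less.prems(3)[of i j] that kk unfolding r_def by simp
    have zero: "A $$ (j,l) = 0" if "r j j = 0" "l < n" for j l
      using zero_row[where A=A and j=j and n=n and l=l] that unfolding r_def by simp
    have rk: "(\<Sum>l<n. A' $$ (k',l) * A $$ (j,l)) = 0" if "k' < j" "j < n" for j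
    proof -
      have "(\<Sum>l<n. A' $$ (k',l) * A $$ (j,l)) = r k' j + (\<Sum>m\<in>J. c m * r m j)"
        unfolding r_def
        by (simp add: A'k algebra_simps sum.distrib sum_distrib_left sum_distrib_right
            sum.swap[of _ J "{..<n}"])
      also have "\<dots> = 0"
      proof (cases "j \<in> J")
        case True
        have "(\<Sum>m\<in>J. c m * r m j) = c j * r j j"
          by (rule sum.remove[OF finJ True, THEN trans], subst sum.neutral)
            (use rorth that in \<open>auto simp: J_def\<close>)
        then show ?thesis using True unfolding c_def J_def by simp
      next
        case False
        then have "r j j = 0" using that unfolding J_def by auto
        then have zj: "\<And>l. l < n \<Longrightarrow> A $$ (j,l) = 0" using zero by blast
        have "\<And>m. r m j = 0" unfolding r_def by (rule sum.neutral) (simp add: zj)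
        then show ?thesis by simp
      qed
      finally show ?thesis .
    qed
    have orth': "(\<Sum>l<n. A' $$ (i,l) * A' $$ (j,l)) = 0"
      if "k' \<le> i" "i < n" "k' \<le> j" "j < n" "i \<noteq> j" for i j
    proof -
      consider "i = k'" | "j = k'" | "i \<noteq> k'" "j \<noteq> k'" using that by blast
      then show ?thesis
      proof cases
        case 1
        have "(\<Sum>l<n. A' $$ (i,l) * A' $$ (j,l)) = (\<Sum>l<n. A' $$ (k',l) * A $$ (j,l))"
          by (rule sum.cong) (use 1 that A'i in auto)
        then show ?thesis using rk[of j] that 1 by simp
      next
        case 2
        have "(\<Sum>l<n. A' $$ (i,l) * A' $$ (j,l)) = (\<Sum>l<n. A' $$ (k',l) * A $$ (i,l))"
          by (rule sum.cong) (use 2 that A'i in auto)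
        then show ?thesis using rk[of i] that 2 by simp
      next
        case 3
        then show ?thesis using rorth[of i j] that A'i by (simp add: r_def)
      qed
    qed
    have IH: "(det A')^2 \<le> (\<Prod>i<n. \<Sum>l<n. (A' $$ (i,l))^2)"
      by (rule less.IH[of k' A']) (use kk k' A' orth' in auto)
    have rowle: "(\<Sum>l<n. (A' $$ (i,l))^2) \<le> (\<Sum>l<n. (A $$ (i,l))^2)" if "i < n" for i
    proof (cases "i = k'")
      case False
      then show ?thesis using A'i that by simp
    next
      case True
      define p where "p = (\<lambda>l. \<Sum>j\<in>J. c j * A $$ (j,l))"
      have vp: "(\<Sum>l<n. A' $$ (k',l) * p l) = 0"
        unfolding p_def
        by (simp add: sum_distrib_left algebra_simps sum.swap[of _ J "{..<n}"])
          (rule sum.neutral, use rk J_def in \<open>auto simp: mult.assoc sum_distrib_left[symmetric]\<close>)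
      have "(\<Sum>l<n. (A $$ (k',l))^2) = (\<Sum>l<n. (A' $$ (k',l) - p l)^2)"
        by (rule sum.cong) (auto simp: A'k p_def)
      also have "\<dots> = (\<Sum>l<n. (A' $$ (k',l))^2) - 2 * (\<Sum>l<n. A' $$ (k',l) * p l) + (\<Sum>l<n. (p l)^2)"
        by (simp add: power2_diff sum.distrib sum_subtractf sum_distrib_left mult.assoc)
      finally have "(\<Sum>l<n. (A $$ (k',l))^2) = (\<Sum>l<n. (A' $$ (k',l))^2) + (\<Sum>l<n. (p l)^2)"
        using vp by simp
      moreover have "0 \<le> (\<Sum>l<n. (p l)^2)" by (simp add: sum_nonneg)
      ultimately show ?thesis unfolding True by linarith
    qed
    have "(det A)^2 = (det A')^2" using detA' by simp
    also have "\<dots> \<le> (\<Prod>i<n. \<Sum>l<n. (A' $$ (i,l))^2)" by (rule IH)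
    also have "\<dots> \<le> (\<Prod>i<n. \<Sum>l<n. (A $$ (i,l))^2)"
      by (rule prod_mono) (use rowle in \<open>auto intro: sum_nonneg\<close>)
    finally show ?thesis .
  qed
qed

lemma hadamard:
  fixes A :: "real mat"
  assumes "A \<in> carrier_mat n n"
  shows "(det A)^2 \<le> (\<Prod>i<n. \<Sum>l<n. (A $$ (i,l))^2)"
  by (rule hadamard_aux[of n], use assms in auto)


lemma det_EE_bound:
  fixes B :: "int mat" and M :: int
  assumes B: "B \<in> carrier_mat n n" and n: "n \<ge> 1" and M0: "M \<ge> 0"
    and Mb: "\<And>i j. i < n \<Longrightarrow> j < n \<Longrightarrow> \<bar>B $$ (i,j)\<bar> \<le> M"
  shows "\<bar>real_of_int (det (EE n B S))\<bar> \<le> (sqrt (real n) * real_of_int M) ^ n"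
proof -
  define A where "A = map_mat real_of_int (EE n B S)"
  have A: "A \<in> carrier_mat n n" unfolding A_def EE_def by simp
  have dA: "det A = real_of_int (det (EE n B S))" unfolding A_def by simp
  have Aij: "A $$ (i,j) = real_of_int (if i \<in> S then dd n i j else B $$ (i,j))" if "i < n" "j < n" for i j
    using that unfolding A_def EE_def by simp
  have H: "(det A)^2 \<le> (\<Prod>i<n. \<Sum>l<n. (A $$ (i,l))^2)" by (rule hadamard[OF A])
  show ?thesis
  proof (cases "M = 0")
    case True
    have zr: "(\<Sum>l<n. (A $$ (n-1,l))^2) = 0"
    proof (rule sum.neutral, intro ballI)
      fix l assume l: "l \<in> {..<n}"
      have "\<bar>B $$ (n-1,l)\<bar> \<le> 0" using Mb[of "n-1" l] True l n by simp
      then show "(A $$ (n-1,l))^2 = 0" using Aij[of "n-1" l] l n by (simp add: dd_def)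
    qed
    then have pz: "(\<Prod>i<n. \<Sum>l<n. (A $$ (i,l))^2) = 0"
      using n zr by (subst prod_zero_iff) (auto intro!: bexI[of _ "n-1"])
    have "det A = 0" using H[unfolded pz] by simp
    then show ?thesis using dA True n by simp
  next
    case False
    then have M1: "real_of_int M \<ge> 1" using M0 by simp
    have row: "(\<Sum>l<n. (A $$ (i,l))^2) \<le> real n * (real_of_int M)^2" if i: "i < n" for i
    proof (cases "i \<in> S")
      case True
      have "(\<Sum>l<n. (A $$ (i,l))^2) = (\<Sum>l<n. if l = i \<and> i \<noteq> n - 1 then 1 else 0)"
        by (rule sum.cong) (use True i Aij in \<open>auto simp: dd_def\<close>)
      also have "\<dots> = (\<Sum>l<n. if l = i then (if i \<noteq> n - 1 then 1 else 0) else 0)"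
        by (rule sum.cong) auto
      also have "\<dots> \<le> 1" by (simp add: sum.delta)
      also have "\<dots> \<le> real n * (real_of_int M)^2"
      proof -
        have "1 \<le> real n" using n by simp
        moreover have "1 \<le> (real_of_int M)^2" using M1 by (simp add: one_le_power)
        ultimately show ?thesis using mult_mono[of 1 "real n" 1 "(real_of_int M)^2"] by simp
      qed
      finally show ?thesis .
    next
      case False
      have "(\<Sum>l<n. (A $$ (i,l))^2) \<le> (\<Sum>l<n. (real_of_int M)^2)"
      proof (rule sum_mono)
        fix l assume l: "l \<in> {..<n}"
        have "\<bar>real_of_int (B $$ (i,l))\<bar> \<le> real_of_int M" using Mb[of i l] i l by simp
        then have "(real_of_int (B $$ (i,l)))^2 \<le> (real_of_int M)^2"
          by (metis abs_ge_zero power2_abs power_mono)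
        then show "(A $$ (i,l))^2 \<le> (real_of_int M)^2" using Aij[of i l] False i l by simp
      qed
      then show ?thesis by simp
    qed
    have "(det A)^2 \<le> (\<Prod>i<n. real n * (real_of_int M)^2)"
      using H by (rule order_trans) (rule prod_mono, use row in \<open>auto intro: sum_nonneg\<close>)
    also have "\<dots> = ((sqrt (real n) * real_of_int M) ^ n)^2"
    proof -
      have "((sqrt (real n) * real_of_int M) ^ n)^2 = ((sqrt (real n) * real_of_int M)^2) ^ n"
        by (simp only: power_mult[symmetric] mult.commute)
      also have "(sqrt (real n) * real_of_int M)^2 = real n * (real_of_int M)^2"
        by (simp add: power_mult_distrib)
      finally show ?thesis by simp
    qed
    finally have "(det A)^2 \<le> ((sqrt (real n) * real_of_int M) ^ n)^2" .
    then have "\<bar>det A\<bar> \<le> \<bar>(sqrt (real n) * real_of_int M) ^ n\<bar>" by (simp add: abs_le_square_iff)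
    then show ?thesis using dA M0 by simp
  qed
qed


theorem lemma3:
  fixes B :: "int mat" and n :: nat
  assumes "B \<in> carrier_mat n n" and "n \<ge> 1"
  shows "\<forall>i. \<bar>real_of_int (coeff (qpoly n B) i)\<bar>
           \<le> 2 * (2 * sqrt (real n) * real_of_int (Max {\<bar>B $$ (i, j)\<bar> | i j. i < n \<and> j < n})) ^ n"
proof (intro allI)
  fix k
  have B: "B \<in> carrier_mat n n" and n: "n \<ge> 1" by fact+
  define Ms where "Ms = {\<bar>B $$ (i, j)\<bar> | i j. i < n \<and> j < n}"
  define M where "M = Max Ms"
  have Ms: "Ms = (\<lambda>(i,j). \<bar>B $$ (i, j)\<bar>) ` ({..<n} \<times> {..<n})"
    unfolding Ms_def by auto
  have fin: "finite Ms" unfolding Ms by simp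
  have Mb: "\<bar>B $$ (i,j)\<bar> \<le> M" if "i < n" "j < n" for i j
    unfolding M_def by (rule Max_ge[OF fin]) (use that in \<open>auto simp: Ms_def\<close>)
  have M0: "M \<ge> 0" using Mb[of 0 0] n by simp
  let ?R = "sqrt (real n) * real_of_int M"
  have R0: "?R \<ge> 0" using M0 by simp
  have "\<bar>real_of_int (coeff (qpoly n B) k)\<bar> =
      \<bar>\<Sum>S\<in>Pow {0..<n}. real_of_int (if k = card S then (-1)^card S * det (EE n B S) else 0)\<bar>"
    unfolding coeff_qpoly[OF B] of_int_sum ..
  also have "\<dots> \<le> (\<Sum>S\<in>Pow {0..<n}. \<bar>real_of_int (if k = card S then (-1)^card S * det (EE n B S) else 0)\<bar>)"
    by (rule sum_abs)
  also have "\<dots> \<le> (\<Sum>S\<in>Pow {0..<n}. ?R ^ n)"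
  proof (rule sum_mono)
    fix S
    have "\<bar>real_of_int (if k = card S then (-1)^card S * det (EE n B S) else 0)\<bar> \<le> \<bar>real_of_int (det (EE n B S))\<bar>"
      by (simp add: abs_mult)
    also have "\<dots> \<le> ?R ^ n" by (rule det_EE_bound[OF B n M0 Mb])
    finally show "\<bar>real_of_int (if k = card S then (-1)^card S * det (EE n B S) else 0)\<bar> \<le> ?R ^ n" .
  qed
  also have "\<dots> = 2 ^ n * ?R ^ n" by (simp add: card_Pow)
  also have "\<dots> \<le> 2 * (2 ^ n * ?R ^ n)" using R0 by simp
  also have "\<dots> = 2 * (2 * ?R) ^ n" by (simp add: power_mult_distrib)
  finally show "\<bar>real_of_int (coeff (qpoly n B) k)\<bar>
           \<le> 2 * (2 * sqrt (real n) * real_of_int (Max {\<bar>B $$ (i, j)\<bar> | i j. i < n \<and> j < n})) ^ n"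
    unfolding M_def Ms_def by (simp add: mult.assoc)
qed

end
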